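(* Let $\epsilon_1>0$, $n\ge1$, let $u$ be a utility function on contexts of sensitivity $\Delta u\le1$ (context population size or overlap with a fixed starting context, $-\infty$ on non-matching contexts), and let $C_V$ be a starting context with $f_M(D_{C_V},V)=\mathrm{true}$. Consider the Breadth-First Search Sampling algorithm: initialize $C_M=\{C_V\}$ and $\mathrm{Visited}=\emptyset$; while $|\mathrm{Visited}|\le n$ and $C_M\ne\emptyset$: let $C=\mathrm{Exp}^{\epsilon_1}_u(D,C_M)$, add $C$ to $\mathrm{Visited}$ and remove it from $C_M$, and add to $C_M$ every context connected to $C$ that is matching for $V$ and not in $\mathrm{Visited}$. Finally output $\mathrm{Exp}^{\epsilon_1}_u(D,\mathrm{Visited})$. Then this algorithm satisfies $((2n+2)\epsilon_1,\ COE_M(\cdot,V))$-Output Constrained Differential Privacy.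
   Context: Dataset $D$ over categorical attributes $A_1,\dots,A_m$ (domain sizes $|A_i|$, all possible values) and metric attribute $M$; $t=\sum_i|A_i|$. A context is a binary vector of length $t$, $c_{ij}=1$ meaning the $j$-th value of $A_i$ is selected; $D_C$ is the set of tuples of $D$ whose value in every $A_i$ is selected by $C$. Two contexts are connected if their Hamming distance is $1$. $f_M(D_C,V)$ is a deterministic test of whether record $V$ is an outlier in $D_C$ w.r.t. $M$; a context is matching if this is true. $COE_M(D,V)$ is the set of contexts $C$ with $V\in D_C$ and $f_M(D_C,V)=\mathrm{true}$. Sensitivity $\Delta u=\max|u(D_1,r)-u(D_2,r)|$ over neighboring datasets (differing by adding/removing one record) and outputs $r$. $\mathrm{Exp}^{\epsilon}_u(D,\mathcal R)$ outputs $r\in\mathcal R$ with probability $\exp(\epsilon u(D,r)/(2\Delta u))/\sum_{r'\in\mathcal R}\exp(\epsilon u(D,r')/(2\Delta u))$. $D_1,D_2$ are $f$-neighbors if they differ by adding/removing one record and $f(D_1)=f(D_2)\ne\emptyset$; $\mathcal M$ satisfies $(\epsilon,f)$-Output Constrained Differential Privacy if $\Pr[\mathcal M(D_1)\in S]\le e^\epsilon\Pr[\mathcal M(D_2)\in S]$ for all $f$-neighbors and all output sets $S$. *)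

theory Defs
  imports "HOL-Probability.Probability"
begin

text \<open>Categorical attributes A_0..A_(m-1); attribute A_i has values 0..<dsz i.
  A context (binary vector of length t) is represented by the set of selected
  pairs (i,j), i.e. c_ij = 1 iff (i,j) is in the set.\<close>

type_synonym ctx = "(nat \<times> nat) set"

definition ctxs :: "nat \<Rightarrow> (nat \<Rightarrow> nat) \<Rightarrow> ctx set" where
  "ctxs m dsz = Pow (SIGMA i:{..<m}. {..<dsz i})"

definition connected :: "ctx \<Rightarrow> ctx \<Rightarrow> bool" where
  "connected C C' \<longleftrightarrow> card ((C - C') \<union> (C' - C)) = 1"

text \<open>D_C: tuples whose value in every A_i is selected by C
  (attr r i is the index of the value of record r in attribute A_i).\<close>
definition restrict_ctx :: "nat \<Rightarrow> ('r \<Rightarrow> nat \<Rightarrow> nat) \<Rightarrow> 'r multiset \<Rightarrow> ctx \<Rightarrow> 'r multiset" where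
  "restrict_ctx m attr D C = filter_mset (\<lambda>r. \<forall>i<m. (i, attr r i) \<in> C) D"

definition COE :: "nat \<Rightarrow> (nat \<Rightarrow> nat) \<Rightarrow> ('r \<Rightarrow> nat \<Rightarrow> nat) \<Rightarrow> ('r multiset \<Rightarrow> 'r \<Rightarrow> bool)
    \<Rightarrow> 'r multiset \<Rightarrow> 'r \<Rightarrow> ctx set" where
  "COE m dsz attr f D V =
     {C \<in> ctxs m dsz. V \<in># restrict_ctx m attr D C \<and> f (restrict_ctx m attr D C) V}"

definition neighbors :: "'r multiset \<Rightarrow> 'r multiset \<Rightarrow> bool" where
  "neighbors D1 D2 \<longleftrightarrow> (\<exists>r. D2 = D1 + {#r#} \<or> D1 = D2 + {#r#})"

definition exp_mech :: "real \<Rightarrow> real \<Rightarrow> ('c \<Rightarrow> real) \<Rightarrow> 'c set \<Rightarrow> 'c pmf" where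
  "exp_mech eps du q R = embed_pmf (\<lambda>r. if r \<in> R then
      exp (eps * q r / (2 * du)) / (\<Sum>r'\<in>R. exp (eps * q r' / (2 * du))) else 0)"

text \<open>The fuel argument k
  only bounds the number of iterations; with k = n+1 it is never the reason for
  stopping, since every iteration adds a new context to Visited.\<close>
fun bfs_loop :: "real \<Rightarrow> real \<Rightarrow> nat \<Rightarrow> (ctx \<Rightarrow> ctx set) \<Rightarrow> (ctx \<Rightarrow> real) \<Rightarrow> ctx set
    \<Rightarrow> nat \<Rightarrow> ctx set \<times> ctx set \<Rightarrow> (ctx set \<times> ctx set) pmf" where
  "bfs_loop eps du n nbrs q Mt 0 st = return_pmf st"
| "bfs_loop eps du n nbrs q Mt (Suc k) (CM, Vis) =
     (if card Vis \<le> n \<and> CM \<noteq> {} then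
        bind_pmf (exp_mech eps du q CM) (\<lambda>C.
          bfs_loop eps du n nbrs q Mt k
            ((CM - {C}) \<union> {C' \<in> nbrs C. C' \<in> Mt \<and> C' \<notin> Vis \<union> {C}}, Vis \<union> {C}))
      else return_pmf (CM, Vis))"

definition bfs_sample :: "nat \<Rightarrow> (nat \<Rightarrow> nat) \<Rightarrow> ('r \<Rightarrow> nat \<Rightarrow> nat) \<Rightarrow> ('r multiset \<Rightarrow> 'r \<Rightarrow> bool)
    \<Rightarrow> ('r multiset \<Rightarrow> ctx \<Rightarrow> real) \<Rightarrow> real \<Rightarrow> real \<Rightarrow> nat \<Rightarrow> ctx \<Rightarrow> 'r \<Rightarrow> 'r multiset \<Rightarrow> ctx pmf" where
  "bfs_sample m dsz attr f u eps du n CV V D =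
     bind_pmf
       (bfs_loop eps du n (\<lambda>C. {C' \<in> ctxs m dsz. connected C C'}) (u D) (COE m dsz attr f D V)
          (Suc n) ({CV}, {}))
       (\<lambda>(CM, Vis). exp_mech eps du (u D) Vis)"

definition OCDP_on :: "real \<Rightarrow> ('d \<Rightarrow> 'o set) \<Rightarrow> ('d \<Rightarrow> 'x pmf) \<Rightarrow> ('d \<Rightarrow> 'd \<Rightarrow> bool) \<Rightarrow> 'd set \<Rightarrow> bool" where
  "OCDP_on eps g M nb DS \<longleftrightarrow>
     (\<forall>D1\<in>DS. \<forall>D2\<in>DS. nb D1 D2 \<and> g D1 = g D2 \<and> g D1 \<noteq> {} \<longrightarrow>
        (\<forall>S. measure_pmf.prob (M D1) S \<le> exp eps * measure_pmf.prob (M D2) S))"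

end

theory Submission
  imports Defs
begin

lemma pmf_exp_mech:
  assumes "finite R" "R \<noteq> {}"
  shows "pmf (exp_mech eps du q R) r = (if r \<in> R then
      exp (eps * q r / (2 * du)) / (\<Sum>r'\<in>R. exp (eps * q r' / (2 * du))) else 0)"
proof -
  let ?Z = "(\<Sum>r'\<in>R. exp (eps * q r' / (2 * du)))"
  let ?f = "(\<lambda>r. if r \<in> R then exp (eps * q r / (2 * du)) / ?Z else 0)"
  have Zpos: "?Z > 0" using assms by (intro sum_pos) auto
  have nn: "\<And>x. 0 \<le> ?f x" using Zpos by auto
  have "(\<integral>\<^sup>+x. ennreal (?f x) \<partial>count_space UNIV) = (\<integral>\<^sup>+x. ennreal (?f x) * indicator R x \<partial>count_space UNIV)"
    by (intro nn_integral_cong) (auto split: split_indicator)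
  also have "\<dots> = (\<integral>\<^sup>+x. ennreal (?f x) \<partial>count_space R)"
    by (simp add: nn_integral_count_space_indicator)
  also have "\<dots> = (\<Sum>x\<in>R. ennreal (?f x))"
    using assms by (simp add: nn_integral_count_space_finite)
  also have "\<dots> = ennreal (\<Sum>x\<in>R. ?f x)"
    using Zpos by (intro sum_ennreal) auto
  also have "(\<Sum>x\<in>R. ?f x) = (\<Sum>x\<in>R. exp (eps * q x / (2 * du)) / ?Z)"
    by (intro sum.cong) auto
  also have "\<dots> = 1" using Zpos by (simp add: sum_divide_distrib[symmetric])
  finally have prob: "(\<integral>\<^sup>+x. ennreal (?f x) \<partial>count_space UNIV) = 1" by simp
  show ?thesis unfolding exp_mech_def
    by (rule pmf_embed_pmf[OF nn prob])
qed

lemma exp_mech_bound: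
  assumes "eps > 0" "du > 0" "finite R"
    and "\<And>C. C \<in> R \<Longrightarrow> \<bar>q1 C - q2 C\<bar> \<le> du"
  shows "pmf (exp_mech eps du q1 R) r \<le> exp eps * pmf (exp_mech eps du q2 R) r"
proof (cases "R = {}")
  case True
  then have "exp_mech eps du q1 R = exp_mech eps du q2 R" by (simp add: exp_mech_def)
  then show ?thesis using pmf_nonneg[of "exp_mech eps du q2 R" r]
    using assms by (simp add: mult_le_cancel_right1)
next
  case False
  define a where "a = eps / (2 * du)"
  have a: "a > 0" using assms by (simp add: a_def)
  have key: "exp (a * q1 C) \<le> exp (eps/2) * exp (a * q2 C)" 
    "exp (a * q2 C) \<le> exp (eps/2) * exp (a * q1 C)" if "C \<in> R" for C
  proof -
    have "a * (q1 C - q2 C) \<le> a * du" "a * (q2 C - q1 C) \<le> a * du"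
      using assms(4)[OF that] a by (intro mult_left_mono; auto)+
    moreover have "a * du = eps / 2" using assms by (simp add: a_def)
    ultimately show "exp (a * q1 C) \<le> exp (eps/2) * exp (a * q2 C)"
      "exp (a * q2 C) \<le> exp (eps/2) * exp (a * q1 C)"
      by (simp_all add: exp_add[symmetric] algebra_simps)
  qed
  have e1: "\<And>q x. eps * q x / (2 * du) = a * q x" by (simp add: a_def)
  let ?Z1 = "(\<Sum>r'\<in>R. exp (a * q1 r'))"
  let ?Z2 = "(\<Sum>r'\<in>R. exp (a * q2 r'))"
  have Z1: "?Z1 > 0" using False assms by (intro sum_pos) auto
  have Z2: "?Z2 > 0" using False assms by (intro sum_pos) auto
  have Zle: "?Z2 \<le> exp (eps/2) * ?Z1"
    unfolding sum_distrib_left by (intro sum_mono key(2))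
  show ?thesis
  proof (cases "r \<in> R")
    case False
    then show ?thesis using assms \<open>R \<noteq> {}\<close> by (simp add: pmf_exp_mech)
  next
    case True
    have "exp (a * q1 r) / ?Z1 \<le> exp (eps/2) * exp (a * q2 r) / ?Z1"
      using key(1)[OF True] Z1 by (simp add: divide_right_mono)
    also have "\<dots> = exp (eps/2) * exp (eps/2) * exp (a * q2 r) / (exp (eps/2) * ?Z1)"
      by simp
    also have "\<dots> \<le> exp (eps/2) * exp (eps/2) * exp (a * q2 r) / ?Z2"
      using Zle Z2 by (intro divide_left_mono) auto
    also have "exp (eps/2) * exp (eps/2) = exp eps" by (simp add: exp_add[symmetric])
    finally show ?thesis using assms \<open>R \<noteq> {}\<close> True by (simp add: pmf_exp_mech e1)
  qed
qed


lemma bind_bound: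
  assumes c1: "c1 \<ge> 0" and c2: "c2 \<ge> 0"
    and p: "\<And>x. pmf p1 x \<le> c1 * pmf p2 x"
    and f: "\<And>x y. x \<in> set_pmf p1 \<Longrightarrow> pmf (f1 x) y \<le> c2 * pmf (f2 x) y"
  shows "pmf (bind_pmf p1 f1) y \<le> (c1 * c2) * pmf (bind_pmf p2 f2) y"
proof -
  have "ennreal (pmf (bind_pmf p1 f1) y) = (\<integral>\<^sup>+x. ennreal (pmf p1 x) * ennreal (pmf (f1 x) y) \<partial>count_space UNIV)"
    by (simp add: ennreal_pmf_bind nn_integral_measure_pmf)
  also have "\<dots> \<le> (\<integral>\<^sup>+x. ennreal (c1 * c2) * (ennreal (pmf p2 x) * ennreal (pmf (f2 x) y)) \<partial>count_space UNIV)"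
  proof (intro nn_integral_mono)
    fix x
    show "ennreal (pmf p1 x) * ennreal (pmf (f1 x) y) \<le> ennreal (c1 * c2) * (ennreal (pmf p2 x) * ennreal (pmf (f2 x) y))"
    proof (cases "x \<in> set_pmf p1")
      case False then show ?thesis by (simp add: set_pmf_iff)
    next
      case True
      have "pmf p1 x * pmf (f1 x) y \<le> (c1 * pmf p2 x) * (c2 * pmf (f2 x) y)"
        using p f[OF True] by (intro mult_mono) (auto simp: c1 c2)
      then show ?thesis using c1 c2
        by (simp add: ennreal_mult[symmetric] mult_ac)
    qed
  qed
  also have "\<dots> = ennreal (c1 * c2) * (\<integral>\<^sup>+x. ennreal (pmf p2 x) * ennreal (pmf (f2 x) y) \<partial>count_space UNIV)"
    by (simp add: nn_integral_cmult)
  also have "\<dots> = ennreal (c1 * c2) * ennreal (pmf (bind_pmf p2 f2) y)"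
    by (simp add: ennreal_pmf_bind nn_integral_measure_pmf)
  also have "\<dots> = ennreal (c1 * c2 * pmf (bind_pmf p2 f2) y)"
    using c1 c2 by (simp add: ennreal_mult)
  finally show ?thesis
    using c1 c2 by (subst (asm) ennreal_le_iff) auto
qed

lemma set_pmf_exp_mech:
  assumes "finite R" "R \<noteq> {}" "C \<in> set_pmf (exp_mech eps du q R)"
  shows "C \<in> R"
  using assms by (auto simp: set_pmf_iff pmf_exp_mech split: if_splits)

lemma loop_bound:
  assumes eps: "eps > 0" and du: "du > 0" and Mt: "finite Mt"
    and q: "\<And>C. C \<in> Mt \<Longrightarrow> \<bar>q1 C - q2 C\<bar> \<le> du"
    and F: "\<And>CM Vis y. CM \<subseteq> Mt \<Longrightarrow> Vis \<subseteq> Mt \<Longrightarrow> pmf (F1 (CM, Vis)) y \<le> exp eps * pmf (F2 (CM, Vis)) y"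
  shows "fst st \<subseteq> Mt \<Longrightarrow> snd st \<subseteq> Mt \<Longrightarrow>
    pmf (bind_pmf (bfs_loop eps du n nbrs q1 Mt k st) F1) y
      \<le> exp (eps * real (k + 1)) * pmf (bind_pmf (bfs_loop eps du n nbrs q2 Mt k st) F2) y"
proof (induction k arbitrary: st y)
  case 0
  obtain CM Vis where st: "st = (CM, Vis)" by (cases st)
  show ?case using F[of CM Vis y] 0 st by (simp add: bind_return_pmf)
next
  case (Suc k)
  obtain CM Vis where st: "st = (CM, Vis)" by (cases st)
  show ?case
  proof (cases "card Vis \<le> n \<and> CM \<noteq> {}")
    case False
    have "pmf (F1 (CM, Vis)) y \<le> exp eps * pmf (F2 (CM, Vis)) y"
      using F[of CM Vis y] Suc.prems st by simp
    also have "\<dots> \<le> exp (eps * real (Suc k + 1)) * pmf (F2 (CM, Vis)) y"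
      using eps by (intro mult_right_mono) auto
    finally have "pmf (F1 (CM, Vis)) y \<le> exp (eps * real (Suc k + 1)) * pmf (F2 (CM, Vis)) y" .
    moreover have "bfs_loop eps du n nbrs q1 Mt (Suc k) st = return_pmf (CM, Vis)"
      "bfs_loop eps du n nbrs q2 Mt (Suc k) st = return_pmf (CM, Vis)"
      by (simp_all only: st bfs_loop.simps(2) if_not_P[OF False])
    ultimately show ?thesis by (simp add: bind_return_pmf)
  next
    case True
    have CM: "CM \<subseteq> Mt" "Vis \<subseteq> Mt" using Suc.prems st by auto
    have fin: "finite CM" using CM Mt finite_subset by blast
    let ?g = "\<lambda>C. ((CM - {C}) \<union> {C' \<in> nbrs C. C' \<in> Mt \<and> C' \<notin> Vis \<union> {C}}, Vis \<union> {C})"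
    have "pmf (bind_pmf (exp_mech eps du q1 CM) (\<lambda>C. bind_pmf (bfs_loop eps du n nbrs q1 Mt k (?g C)) F1)) y
      \<le> (exp eps * exp (eps * real (k + 1))) * pmf (bind_pmf (exp_mech eps du q2 CM) (\<lambda>C. bind_pmf (bfs_loop eps du n nbrs q2 Mt k (?g C)) F2)) y"
    proof (rule bind_bound)
      show "pmf (exp_mech eps du q1 CM) x \<le> exp eps * pmf (exp_mech eps du q2 CM) x" for x
        using CM fin q by (intro exp_mech_bound[OF eps du]) auto
      fix x y assume "x \<in> set_pmf (exp_mech eps du q1 CM)"
      then have "x \<in> CM" using set_pmf_exp_mech[OF fin] True by blast
      then show "pmf (bind_pmf (bfs_loop eps du n nbrs q1 Mt k (?g x)) F1) y
        \<le> exp (eps * real (k + 1)) * pmf (bind_pmf (bfs_loop eps du n nbrs q2 Mt k (?g x)) F2) y"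
        using CM by (intro Suc.IH) (auto simp del: Un_insert_right)
    qed auto
    moreover have "exp eps * exp (eps * real (k + 1)) = exp (eps * real (Suc k + 1))"
      by (simp add: exp_add[symmetric] algebra_simps)
    moreover have "bfs_loop eps du n nbrs q1 Mt (Suc k) st = bind_pmf (exp_mech eps du q1 CM) (\<lambda>C. bfs_loop eps du n nbrs q1 Mt k (?g C))"
      "bfs_loop eps du n nbrs q2 Mt (Suc k) st = bind_pmf (exp_mech eps du q2 CM) (\<lambda>C. bfs_loop eps du n nbrs q2 Mt k (?g C))"
      by (simp_all only: st bfs_loop.simps(2) if_P[OF True])
    ultimately show ?thesis by (simp only: bind_assoc_pmf)
  qed
qed

lemma prob_bound:
  assumes "c \<ge> 0" "\<And>x. pmf p1 x \<le> c * pmf p2 x"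
  shows "measure_pmf.prob p1 S \<le> c * measure_pmf.prob p2 S"
proof -
  have "emeasure (measure_pmf p1) S = (\<integral>\<^sup>+ x. pmf p1 x \<partial>count_space S)"
    by (simp add: nn_integral_pmf)
  also have "\<dots> \<le> (\<integral>\<^sup>+ x. ennreal c * pmf p2 x \<partial>count_space S)"
    using assms by (intro nn_integral_mono) (simp add: ennreal_mult[symmetric])
  also have "\<dots> = ennreal c * emeasure (measure_pmf p2) S"
    by (simp add: nn_integral_cmult nn_integral_pmf)
  finally have "ennreal (measure_pmf.prob p1 S) \<le> ennreal (c * measure_pmf.prob p2 S)"
    using assms by (simp add: measure_pmf.emeasure_eq_measure ennreal_mult)
  then show ?thesis using assms by (subst (asm) ennreal_le_iff) auto
qed

theorem theorem10:
  fixes m :: nat and dsz :: "nat \<Rightarrow> nat" and attr :: "'r \<Rightarrow> nat \<Rightarrow> nat"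
    and f :: "'r multiset \<Rightarrow> 'r \<Rightarrow> bool" and u :: "'r multiset \<Rightarrow> ctx \<Rightarrow> real"
    and eps1 du :: real and n :: nat and CV :: ctx and V :: 'r
  assumes "eps1 > 0" and "n \<ge> 1" and "du > 0" and "du \<le> 1"
    and "\<forall>D1 D2 C. neighbors D1 D2 \<and> C \<in> COE m dsz attr f D1 V \<and> C \<in> COE m dsz attr f D2 V
           \<longrightarrow> \<bar>u D1 C - u D2 C\<bar> \<le> du"
    and "CV \<in> ctxs m dsz"
  shows "OCDP_on ((2 * real n + 2) * eps1) (\<lambda>D. COE m dsz attr f D V)
           (bfs_sample m dsz attr f u eps1 du n CV V) neighbors
           {D. CV \<in> COE m dsz attr f D V}"
  unfolding OCDP_on_def
proof (intro ballI impI allI)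
  fix D1 D2 S
  assume D1: "D1 \<in> {D. CV \<in> COE m dsz attr f D V}" and D2: "D2 \<in> {D. CV \<in> COE m dsz attr f D V}"
    and H: "neighbors D1 D2 \<and> COE m dsz attr f D1 V = COE m dsz attr f D2 V \<and> COE m dsz attr f D1 V \<noteq> {}"
  define Mt where "Mt = COE m dsz attr f D1 V"
  have Mt2: "COE m dsz attr f D2 V = Mt" using H Mt_def by simp
  have finMt: "finite Mt"
  proof -
    have "Mt \<subseteq> ctxs m dsz" unfolding Mt_def COE_def by auto
    moreover have "finite (ctxs m dsz)" unfolding ctxs_def by auto
    ultimately show ?thesis using finite_subset by blast
  qed
  have CV: "CV \<in> Mt" using D1 Mt_def by simp
  have q: "\<bar>u D1 C - u D2 C\<bar> \<le> du" if "C \<in> Mt" for C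
    using assms(5) H that Mt2 Mt_def by blast
  let ?nb = "\<lambda>C. {C' \<in> ctxs m dsz. connected C C'}"
  have pw: "pmf (bfs_sample m dsz attr f u eps1 du n CV V D1) y
      \<le> exp (eps1 * real (Suc n + 1)) * pmf (bfs_sample m dsz attr f u eps1 du n CV V D2) y" for y
    unfolding bfs_sample_def Mt2 Mt_def[symmetric]
  proof (rule loop_bound[OF assms(1) assms(3) finMt q])
    fix CM Vis y assume "CM \<subseteq> Mt" "Vis \<subseteq> Mt"
    then show "pmf ((\<lambda>(CM, Vis). exp_mech eps1 du (u D1) Vis) (CM, Vis)) y
      \<le> exp eps1 * pmf ((\<lambda>(CM, Vis). exp_mech eps1 du (u D2) Vis) (CM, Vis)) y"
      using finMt q by (simp; intro exp_mech_bound[OF assms(1) assms(3)]) (auto intro: finite_subset)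
  qed (use CV in auto)
  have le: "exp (eps1 * real (Suc n + 1)) \<le> exp ((2 * real n + 2) * eps1)"
    using assms(1,2) by (simp add: algebra_simps)
  have "measure_pmf.prob (bfs_sample m dsz attr f u eps1 du n CV V D1) S
      \<le> exp (eps1 * real (Suc n + 1)) * measure_pmf.prob (bfs_sample m dsz attr f u eps1 du n CV V D2) S"
    by (rule prob_bound[OF _ pw]) simp
  also have "\<dots> \<le> exp ((2 * real n + 2) * eps1) * measure_pmf.prob (bfs_sample m dsz attr f u eps1 du n CV V D2) S"
    by (intro mult_right_mono le) simp
  finally show "measure_pmf.prob (bfs_sample m dsz attr f u eps1 du n CV V D1) S
      \<le> exp ((2 * real n + 2) * eps1) * measure_pmf.prob (bfs_sample m dsz attr f u eps1 du n CV V D2) S" .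
qed

end
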